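(* Let $0<a,b<1$, $r>as$, $s>br$, and consider the variable-control system $$x_{n+1}=x_n[(1-\alpha_{n+1})e^{r-x_n-ay_n}+\alpha_{n+1}],\quad y_{n+1}=y_n[(1-\beta_{n+1})e^{s-bx_n-y_n}+\beta_{n+1}],\quad n\in\mathbb N_0.$$ The equilibrium $K=(p,q)$ is locally asymptotically stable if either of the following holds: (a) there exist $\lambda\in(0,1)$, a norm on $\mathbb R^2$ (with induced matrix norm $\|\cdot\|$) and constants $0\le\alpha_*<\alpha^*<1$, $0\le\beta_*<\beta^*<1$ such that for all $n$, $\alpha_n\in(\alpha_*,\alpha^* )$, $\beta_n\in(\beta_*,\beta^* )$ and $\|J_{\alpha_n,\beta_n}\|\le\lambda$; (b) there are constants $0\le\alpha_*<\alpha^*<1$, $0\le\beta_*<\beta^*<1$ with $\alpha_*\in\big(\max\{1-\frac{2}{p(1+a)},0\},1\big)$, $\beta_*\in\big(\max\{1-\frac{2}{q(1+b)},0\},1\big)$, and $\alpha_n\in(\alpha_*,\alpha^* )$, $\beta_n\in(\beta_*,\beta^* )$ for all $n\in\mathbb N_0$.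
   Context: $p=\frac{r-as}{1-ab}$, $q=\frac{s-br}{1-ab}$, $K=(p,q)$. For $\alpha,\beta\in[0,1)$ the Jacobian of the controlled Ricker map at $K$ is $J_{\alpha,\beta}=\begin{pmatrix}1-(1-\alpha)p & -a(1-\alpha)p\\ -b(1-\beta)q & 1-(1-\beta)q\end{pmatrix}$. *)

theory Defs
  imports "HOL-Analysis.Analysis"
begin

definition eq_p :: "real \<Rightarrow> real \<Rightarrow> real \<Rightarrow> real \<Rightarrow> real" where
  "eq_p a b r s = (r - a * s) / (1 - a * b)"
definition eq_q :: "real \<Rightarrow> real \<Rightarrow> real \<Rightarrow> real \<Rightarrow> real" where
  "eq_q a b r s = (s - b * r) / (1 - a * b)"

text \<open>Trajectory of the variable-control Ricker system started at (x0,y0) at time 0;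
  step n uses the controls alpha (n+1), beta (n+1).\<close>
primrec traj :: "real \<Rightarrow> real \<Rightarrow> real \<Rightarrow> real \<Rightarrow> (nat \<Rightarrow> real) \<Rightarrow> (nat \<Rightarrow> real)
   \<Rightarrow> real \<times> real \<Rightarrow> nat \<Rightarrow> real \<times> real" where
  "traj a b r s alpha beta z0 0 = z0"
| "traj a b r s alpha beta z0 (Suc n) =
     (let (x, y) = traj a b r s alpha beta z0 n in
      (x * ((1 - alpha (Suc n)) * exp (r - x - a * y) + alpha (Suc n)),
       y * ((1 - beta (Suc n)) * exp (s - b * x - y) + beta (Suc n))))"

definition loc_asym_stable ::
  "real \<Rightarrow> real \<Rightarrow> real \<Rightarrow> real \<Rightarrow> (nat \<Rightarrow> real) \<Rightarrow> (nat \<Rightarrow> real) \<Rightarrow> bool" where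
  "loc_asym_stable a b r s alpha beta \<longleftrightarrow>
     (let K = (eq_p a b r s, eq_q a b r s) in
      (\<forall>\<epsilon>>0. \<exists>\<delta>>0. \<forall>z0. dist z0 K < \<delta> \<longrightarrow>
          (\<forall>n. dist (traj a b r s alpha beta z0 n) K < \<epsilon>)) \<and>
      (\<exists>\<delta>>0. \<forall>z0. dist z0 K < \<delta> \<longrightarrow>
          (traj a b r s alpha beta z0 \<longlonglongrightarrow> K)))"

definition jac :: "real \<Rightarrow> real \<Rightarrow> real \<Rightarrow> real \<Rightarrow> real \<Rightarrow> real \<Rightarrow> real^2^2" where
  "jac a b r s al be =
     (let p = eq_p a b r s; q = eq_q a b r s in
      vector [vector [1 - (1 - al) * p, - a * (1 - al) * p],
              vector [- b * (1 - be) * q, 1 - (1 - be) * q]])"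

definition is_norm_R2 :: "(real^2 \<Rightarrow> real) \<Rightarrow> bool" where
  "is_norm_R2 N \<longleftrightarrow>
     (\<forall>x. 0 \<le> N x) \<and> (\<forall>x. N x = 0 \<longleftrightarrow> x = 0) \<and>
     (\<forall>c x. N (c *\<^sub>R x) = \<bar>c\<bar> * N x) \<and> (\<forall>x y. N (x + y) \<le> N x + N y)"

definition induced_norm :: "(real^2 \<Rightarrow> real) \<Rightarrow> real^2^2 \<Rightarrow> real" where
  "induced_norm N A = Sup {N (A *v x) | x. N x = 1}"

end

theory Submission
  imports Defs
begin

lemma exp_quad: fixes t::real assumes "\<bar>t\<bar> \<le> 1" shows "\<bar>exp t - 1 - t\<bar> \<le> t\<^sup>2"
proof (cases "t \<ge> 0")
  case True
  have "exp t \<le> 1 + t + t\<^sup>2" using exp_bound[of t] assms True by auto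
  moreover have "1 + t \<le> exp t" by (rule exp_ge_add_one_self)
  moreover have "0 \<le> t\<^sup>2" by simp
  ultimately show ?thesis by linarith
next
  case False
  define s where "s = -t"
  have s: "s > 0" using False s_def by auto
  have "exp t = 1 / exp s" by (simp add: s_def exp_minus field_simps)
  also have "\<dots> \<le> 1 / (1 + s)" using exp_ge_add_one_self[of s] s by (intro divide_left_mono) auto
  also have "\<dots> \<le> 1 - s + s\<^sup>2"
  proof -
    have e: "(1 + s) * (1 - s + s\<^sup>2) = 1 + s * s\<^sup>2" by (simp add: algebra_simps power2_eq_square)
    have "0 \<le> s * s\<^sup>2" using s by simp
    then have "1 \<le> (1 + s) * (1 - s + s\<^sup>2)" using e by linarith
    then show ?thesis using s by (simp add: divide_le_eq mult.commute)
  qed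
  finally have "exp t \<le> 1 + t + t\<^sup>2" by (simp add: s_def)
  moreover have "1 + t \<le> exp t" by (rule exp_ge_add_one_self)
  moreover have "0 \<le> t\<^sup>2" by simp
  ultimately show ?thesis by linarith
qed

lemma rem_bound:
  fixes u v p a c rho :: real
  assumes "\<bar>u\<bar> \<le> rho" "\<bar>v\<bar> \<le> rho" "rho \<le> 1/2" "0 \<le> a" "a \<le> 1" "0 \<le> c" "c \<le> 1" "p > 0"
  shows "\<bar>(p+u)*(c*exp(-(u + a * v)) + (1-c)) - p - (u - c*p*(u + a * v))\<bar> \<le> 4*(p+1)*rho\<^sup>2"
proof -
  define w where "w = u + a * v"
  have "a * \<bar>v\<bar> \<le> 1 * rho" using assms by (intro mult_mono) simp_all
  then have aw: "\<bar>a * v\<bar> \<le> rho" using assms by (simp add: abs_mult)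
  have w: "\<bar>w\<bar> \<le> 2*rho" using assms aw abs_triangle_ineq[of u "a * v"] unfolding w_def by linarith
  have w1: "\<bar>-w\<bar> \<le> 1" using w assms by simp
  have e: "\<bar>exp(-w) - 1 + w\<bar> \<le> w\<^sup>2" using exp_quad[OF w1] by simp
  have "\<bar>w\<bar> * \<bar>w\<bar> \<le> \<bar>w\<bar> * 1" using w1 by (intro mult_left_mono) auto
  then have ww: "w\<^sup>2 \<le> \<bar>w\<bar>" by (simp add: power2_eq_square abs_mult[symmetric])
  have e1: "\<bar>exp(-w) - 1\<bar> \<le> 2*\<bar>w\<bar>" using e ww by linarith
  have eq: "(p+u)*(c*exp(-(u + a * v)) + (1-c)) - p - (u - c*p*(u + a * v)) = c*(p*(exp(-w) - 1 + w) + u*(exp(-w)-1))"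
    unfolding w_def by (simp add: algebra_simps)
  define Q where "Q = p*(exp(-w) - 1 + w) + u*(exp(-w)-1)"
  have "\<bar>c * Q\<bar> \<le> 1 * \<bar>Q\<bar>"
    using assms unfolding abs_mult by (intro mult_right_mono) auto
  also have "\<bar>Q\<bar> \<le> p*w\<^sup>2 + \<bar>u\<bar>*(2*\<bar>w\<bar>)"
  proof -
    have "\<bar>p*(exp(-w) - 1 + w)\<bar> \<le> p*w\<^sup>2" using e assms by (simp add: abs_mult)
    moreover have "\<bar>u*(exp(-w)-1)\<bar> \<le> \<bar>u\<bar>*(2*\<bar>w\<bar>)" using e1 by (simp add: abs_mult mult_left_mono)
    ultimately show ?thesis unfolding Q_def using abs_triangle_ineq[of "p*(exp(-w) - 1 + w)" "u*(exp(-w)-1)"] by linarith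
  qed
  also have "\<dots> \<le> p*(4*rho\<^sup>2) + rho*(2*(2*rho))"
  proof -
    have "\<bar>w\<bar> * \<bar>w\<bar> \<le> (2*rho) * (2*rho)" using w by (intro mult_mono) auto
    then have "w\<^sup>2 \<le> 4*rho\<^sup>2" by (simp add: power2_eq_square abs_mult[symmetric])
    then have "p*w\<^sup>2 \<le> p*(4*rho\<^sup>2)" using assms by (intro mult_left_mono) auto
    moreover have "\<bar>u\<bar>*(2*\<bar>w\<bar>) \<le> rho*(2*(2*rho))" using assms w by (intro mult_mono) auto
    ultimately show ?thesis by linarith
  qed
  also have "\<dots> = 4*(p+1)*rho\<^sup>2" by (simp add: algebra_simps power2_eq_square)
  finally show ?thesis using eq unfolding Q_def by simp
qed
lemma norm_vec2: "norm (vector [u, v] :: real^2) = sqrt (u\<^sup>2 + v\<^sup>2)"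
  by (simp add: norm_vec_def L2_set_def sum_2)

lemma dist_vec2: "dist (x, y) (p, q) = norm (vector [x - p, y - q] :: real^2)"
  by (simp add: norm_vec2 dist_Pair_Pair dist_real_def)

lemma vec2_decomp: "(x :: real^2) = (x$1) *\<^sub>R vector [1, 0] + (x$2) *\<^sub>R vector [0, 1]"
  by (simp add: vec_eq_iff forall_2)

lemma vec2_eq: "(x :: real^2) = vector [x$1, x$2]"
  by (simp add: vec_eq_iff forall_2)

lemma mv2: "(vector [vector [a11, a12], vector [a21, a22]] :: real^2^2) *v vector [u, v]
   = vector [a11 * u + a12 * v, a21 * u + a22 * v]"
  by (simp add: vec_eq_iff forall_2 matrix_vector_mult_def sum_2)

lemma vec2_add: "vector [a1, a2] + vector [b1, b2] = (vector [a1 + b1, a2 + b2] :: real^2)"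
  by (simp add: vec_eq_iff forall_2)



lemma one_step:
  fixes N :: "real^2 \<Rightarrow> real"
  assumes hom: "\<And>c x. N (c *\<^sub>R x) = \<bar>c\<bar> * N x"
    and tri: "\<And>x y. N (x + y) \<le> N x + N y"
    and low: "\<And>x. m * norm x \<le> N x" and m: "m > 0"
    and up: "\<And>x. N x \<le> C * (\<bar>x$1\<bar> + \<bar>x$2\<bar>)" and C: "C > 0"
    and pq: "p > 0" "q > 0" and r: "r = p + a * q" and s: "s = b * p + q"
    and ab: "0 \<le> a" "a \<le> 1" "0 \<le> b" "b \<le> 1"
    and al: "0 \<le> al" "al \<le> 1" and be: "0 \<le> be" "be \<le> 1"
    and Jb: "\<And>x. N ((vector [vector [1 - (1 - al) * p, - a * (1 - al) * p],
              vector [- b * (1 - be) * q, 1 - (1 - be) * q]] :: real^2^2) *v x) \<le> lam * N x"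
    and small: "N (vector [x - p, y - q]) \<le> m / 2"
  shows "N (vector [x * ((1 - al) * exp (r - x - a * y) + al) - p,
                    y * ((1 - be) * exp (s - b * x - y) + be) - q])
         \<le> lam * N (vector [x - p, y - q])
            + (C * 4 * (p + q + 2) / m\<^sup>2) * (N (vector [x - p, y - q]))\<^sup>2"
proof -
  define u where "u = x - p"
  define v where "v = y - q"
  define N0 where "N0 = N (vector [u, v])"
  define rho where "rho = N0 / m"
  have nv: "norm (vector [u, v] :: real^2) \<le> rho"
    using low[of "vector [u, v]"] m unfolding rho_def N0_def by (simp add: field_simps)
  have ur: "\<bar>u\<bar> \<le> rho" using component_le_norm_cart[of "vector [u, v] :: real^2" 1] nv by simp
  have vr: "\<bar>v\<bar> \<le> rho" using component_le_norm_cart[of "vector [u, v] :: real^2" 2] nv by simp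
  have rho2: "rho \<le> 1/2" using small m unfolding rho_def N0_def u_def v_def by (simp add: field_simps)
  define R1 where "R1 = x * ((1 - al) * exp (r - x - a * y) + al) - p - (u - (1 - al) * p * (u + a * v))"
  define R2 where "R2 = y * ((1 - be) * exp (s - b * x - y) + be) - q - (v - (1 - be) * q * (v + b * u))"
  have R1: "\<bar>R1\<bar> \<le> 4 * (p + 1) * rho\<^sup>2"
  proof -
    have "x = p + u" "r - x - a * y = - (u + a * v)" "al = 1 - (1 - al)"
      using r unfolding u_def v_def by (auto simp: algebra_simps)
    then have "R1 = (p+u)*((1 - al)*exp(-(u + a * v)) + (1-(1 - al))) - p - (u - (1 - al)*p*(u + a * v))"
      unfolding R1_def by simp
    then show ?thesis using rem_bound[OF ur vr rho2 ab(1,2), of "1 - al" p] al pq by simp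
  qed
  have R2: "\<bar>R2\<bar> \<le> 4 * (q + 1) * rho\<^sup>2"
  proof -
    have "y = q + v" "s - b * x - y = - (v + b * u)" "be = 1 - (1 - be)"
      using s unfolding u_def v_def by (auto simp: algebra_simps)
    then have "R2 = (q+v)*((1 - be)*exp(-(v + b * u)) + (1-(1 - be))) - q - (v - (1 - be)*q*(v + b * u))"
      unfolding R2_def by simp
    then show ?thesis using rem_bound[OF vr ur rho2 ab(3,4), of "1 - be" q] be pq by simp
  qed
  define J where "J = (vector [vector [1 - (1 - al) * p, - a * (1 - al) * p],
              vector [- b * (1 - be) * q, 1 - (1 - be) * q]] :: real^2^2)"
  have dec: "vector [x * ((1 - al) * exp (r - x - a * y) + al) - p,
                    y * ((1 - be) * exp (s - b * x - y) + be) - q]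
        = J *v vector [u, v] + vector [R1, R2]"
    unfolding J_def mv2 vec2_add R1_def R2_def by (simp add: algebra_simps)
  have "N (J *v vector [u, v] + vector [R1, R2]) \<le> N (J *v vector [u, v]) + N (vector [R1, R2])"
    by (rule tri)
  also have "\<dots> \<le> lam * N0 + C * (\<bar>R1\<bar> + \<bar>R2\<bar>)"
    using Jb[of "vector [u, v]"] up[of "vector [R1, R2]"] unfolding J_def N0_def by simp
  also have "\<dots> \<le> lam * N0 + C * (4 * (p + q + 2) * rho\<^sup>2)"
    using R1 R2 C by (intro add_left_mono mult_left_mono) (auto simp: algebra_simps)
  also have "\<dots> = lam * N0 + (C * 4 * (p + q + 2) / m\<^sup>2) * N0\<^sup>2"
    unfolding rho_def using m by (simp add: field_simps power2_eq_square)
  finally show ?thesis using dec unfolding N0_def u_def v_def by simp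
qed


lemma core:
  fixes N :: "real^2 \<Rightarrow> real" and alpha beta :: "nat \<Rightarrow> real"
  assumes hom: "\<And>c x. N (c *\<^sub>R x) = \<bar>c\<bar> * N x"
    and tri: "\<And>x y. N (x + y) \<le> N x + N y"
    and low: "\<And>x. m * norm x \<le> N x" and m: "m > 0"
    and up: "\<And>x. N x \<le> C * (\<bar>x$1\<bar> + \<bar>x$2\<bar>)" and C: "C > 0"
    and ab: "0 < a" "a < 1" "0 < b" "b < 1" and rs: "r > a * s" "s > b * r"
    and al: "\<And>n. 0 \<le> alpha n \<and> alpha n \<le> 1" and be: "\<And>n. 0 \<le> beta n \<and> beta n \<le> 1"
    and lam: "0 \<le> lam" "lam < 1"
    and Jb: "\<And>n x. N (jac a b r s (alpha n) (beta n) *v x) \<le> lam * N x"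
  shows "loc_asym_stable a b r s alpha beta"
proof -
  define p where "p = eq_p a b r s"
  define q where "q = eq_q a b r s"
  have "a * b < 1 * 1" using ab by (intro mult_strict_mono) auto
  then have ab1: "1 - a * b > 0" by simp
  have p: "p > 0" using ab1 rs unfolding p_def eq_p_def by simp
  have q: "q > 0" using ab1 rs unfolding q_def eq_q_def by simp
  have nz: "1 - a * b \<noteq> 0" using ab1 by simp
  have "p + a * q = ((r - a * s) + a * (s - b * r)) / (1 - a * b)"
    unfolding p_def q_def eq_p_def eq_q_def by (simp add: add_divide_distrib)
  also have "\<dots> = r * (1 - a * b) / (1 - a * b)" by (simp add: algebra_simps)
  finally have r: "r = p + a * q" using nz by simp
  have "b * p + q = (b * (r - a * s) + (s - b * r)) / (1 - a * b)"
    unfolding p_def q_def eq_p_def eq_q_def by (simp add: add_divide_distrib)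
  also have "\<dots> = s * (1 - a * b) / (1 - a * b)" by (simp add: algebra_simps)
  finally have s: "s = b * p + q" using nz by simp
  define V where "V z = (vector [fst z - p, snd z - q] :: real^2)" for z :: "real \<times> real"
  define T where "T = traj a b r s alpha beta"
  define K' where "K' = C * 4 * (p + q + 2) / m\<^sup>2"
  have K': "K' > 0" unfolding K'_def using C m p q by simp
  define mu where "mu = (1 + lam) / 2"
  have mu: "0 \<le> mu" "mu < 1" using lam unfolding mu_def by auto
  define d0 where "d0 = min (m / 2) ((1 - lam) / (2 * K'))"
  have d0: "d0 > 0" unfolding d0_def using m lam K' by simp
  have Nnn: "0 \<le> N x" for x using low[of x] m by (smt (verit) norm_ge_zero mult_nonneg_nonneg)
  have step: "N (V (T z0 (Suc n))) \<le> mu * N (V (T z0 n))" if sm: "N (V (T z0 n)) \<le> d0" for z0 n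
  proof -
    obtain x y where xy: "T z0 n = (x, y)" by fastforce
    have TS: "T z0 (Suc n) = (x * ((1 - alpha (Suc n)) * exp (r - x - a * y) + alpha (Suc n)),
       y * ((1 - beta (Suc n)) * exp (s - b * x - y) + beta (Suc n)))"
      using xy unfolding T_def by simp
    have Jb': "N ((vector [vector [1 - (1 - alpha (Suc n)) * p, - a * (1 - alpha (Suc n)) * p],
              vector [- b * (1 - beta (Suc n)) * q, 1 - (1 - beta (Suc n)) * q]] :: real^2^2) *v x') \<le> lam * N x'" for x'
      using Jb[of "Suc n" x'] unfolding jac_def Let_def p_def q_def by simp
    define N0 where "N0 = N (vector [x - p, y - q])"
    have sm': "N0 \<le> m / 2" "N0 \<le> (1 - lam) / (2 * K')" using sm xy unfolding N0_def V_def d0_def by auto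
    have "N (V (T z0 (Suc n))) \<le> lam * N0 + K' * N0\<^sup>2"
      unfolding TS V_def N0_def K'_def fst_conv snd_conv
      using one_step[OF hom tri low m up C p q r s _ _ _ _ _ _ _ _ Jb'] ab al[of "Suc n"] be[of "Suc n"] sm'(1)
      unfolding N0_def by simp
    also have "K' * N0\<^sup>2 \<le> ((1 - lam) / 2) * N0"
    proof -
      have "K' * N0 \<le> (1 - lam) / 2" using sm'(2) K' by (simp add: field_simps)
      then have "(K' * N0) * N0 \<le> ((1 - lam) / 2) * N0" using Nnn[of "vector [x - p, y - q]"] unfolding N0_def
        by (intro mult_right_mono) auto
      then show ?thesis by (simp add: power2_eq_square algebra_simps)
    qed
    then have "lam * N0 + K' * N0\<^sup>2 \<le> mu * N0" unfolding mu_def by (simp add: algebra_simps)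
    finally show ?thesis using xy unfolding N0_def V_def by simp
  qed
  have decay: "N (V (T z0 n)) \<le> mu ^ n * N (V (T z0 0))" if sm: "N (V (T z0 0)) \<le> d0" for z0 n
  proof (induction n)
    case 0 then show ?case by simp
  next
    case (Suc n)
    have "mu ^ n * N (V (T z0 0)) \<le> 1 * N (V (T z0 0))"
      using mu Nnn by (intro mult_right_mono) (auto simp: power_le_one)
    then have "N (V (T z0 n)) \<le> d0" using Suc sm by simp
    then have "N (V (T z0 (Suc n))) \<le> mu * N (V (T z0 n))" by (rule step)
    also have "\<dots> \<le> mu * (mu ^ n * N (V (T z0 0)))" using Suc mu by (intro mult_left_mono) auto
    finally show ?case by simp
  qed
  have distV: "dist z (p, q) = norm (V z)" for z
    using dist_vec2[of "fst z" "snd z" p q] unfolding V_def by simp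
  have dist_le: "dist z (p, q) \<le> N (V z) / m" for z
    using low[of "V z"] m distV[of z] by (simp add: field_simps)
  have N_le: "N (V z) \<le> 2 * C * dist z (p, q)" for z
  proof -
    have "N (V z) \<le> C * (\<bar>V z $ 1\<bar> + \<bar>V z $ 2\<bar>)" by (rule up)
    also have "\<dots> \<le> C * (norm (V z) + norm (V z))"
      using C component_le_norm_cart[of "V z" 1] component_le_norm_cart[of "V z" 2]
      by (intro mult_left_mono add_mono) auto
    finally show ?thesis using distV[of z] by simp
  qed
  have T0: "T z0 0 = z0" for z0 unfolding T_def by simp
  have part1: "\<forall>\<epsilon>>0. \<exists>\<delta>>0. \<forall>z0. dist z0 (p, q) < \<delta> \<longrightarrow> (\<forall>n. dist (T z0 n) (p, q) < \<epsilon>)"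
  proof (intro allI impI)
    fix e :: real assume e: "e > 0"
    define dl where "dl = min (d0 / (2 * C)) (e * m / (2 * C))"
    have dl: "dl > 0" unfolding dl_def using d0 e m C by simp
    show "\<exists>\<delta>>0. \<forall>z0. dist z0 (p, q) < \<delta> \<longrightarrow> (\<forall>n. dist (T z0 n) (p, q) < e)"
    proof (intro exI[of _ dl] conjI allI impI dl)
      fix z0 n assume z0: "dist z0 (p, q) < dl"
      have "N (V z0) < 2 * C * dl" using N_le[of z0] z0 C by (smt (verit) mult_strict_left_mono)
      moreover have "2 * C * dl \<le> 2 * C * (d0 / (2 * C))" "2 * C * dl \<le> 2 * C * (e * m / (2 * C))"
        unfolding dl_def using C by (intro mult_left_mono; simp)+
      ultimately have N1: "N (V z0) < d0" "N (V z0) < e * m" using C by auto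
      have "dist (T z0 n) (p, q) \<le> N (V (T z0 n)) / m" by (rule dist_le)
      also have "\<dots> \<le> mu ^ n * N (V z0) / m" using decay[of z0 n] N1 T0 m by (simp add: divide_right_mono)
      also have "\<dots> \<le> 1 * N (V z0) / m" using mu Nnn m
        by (intro divide_right_mono mult_right_mono) (auto simp: power_le_one)
      also have "\<dots> < e" using N1 m by (simp add: field_simps)
      finally show "dist (T z0 n) (p, q) < e" .
    qed
  qed
  have part2: "\<exists>\<delta>>0. \<forall>z0. dist z0 (p, q) < \<delta> \<longrightarrow> (T z0 \<longlonglongrightarrow> (p, q))"
  proof (intro exI[of _ "d0 / (2 * C)"] conjI allI impI)
    show "d0 / (2 * C) > 0" using d0 C by simp
    fix z0 assume z0: "dist z0 (p, q) < d0 / (2 * C)"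
    have "N (V z0) \<le> d0" using N_le[of z0] z0 C by (simp add: field_simps)
    then have bnd: "dist (T z0 n) (p, q) \<le> mu ^ n * (N (V z0) / m)" for n
      using dist_le[of "T z0 n"] decay[of z0 n] T0 m by (smt (verit) divide_right_mono times_divide_eq_right)
    have lim: "(\<lambda>n. mu ^ n * (N (V z0) / m)) \<longlonglongrightarrow> 0"
      using mu by (intro tendsto_mult_left_zero LIMSEQ_power_zero) auto
    have "(\<lambda>n. dist (T z0 n) (p, q)) \<longlonglongrightarrow> 0"
      by (rule tendsto_sandwich[OF _ _ tendsto_const lim]) (use bnd in auto)
    then show "T z0 \<longlonglongrightarrow> (p, q)" by (rule iffD2[OF tendsto_dist_iff])
  qed
  have "loc_asym_stable a b r s alpha beta \<longleftrightarrow>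
     (\<forall>\<epsilon>>0. \<exists>\<delta>>0. \<forall>z0. dist z0 (p, q) < \<delta> \<longrightarrow> (\<forall>n. dist (T z0 n) (p, q) < \<epsilon>)) \<and>
     (\<exists>\<delta>>0. \<forall>z0. dist z0 (p, q) < \<delta> \<longrightarrow> (T z0 \<longlonglongrightarrow> (p, q)))"
    unfolding loc_asym_stable_def Let_def T_def p_def q_def by (rule refl)
  then show ?thesis using part1 part2 by (rule iffD2[OF _ conjI])
qed


lemma norm_up:
  assumes "is_norm_R2 N"
  shows "\<exists>C>0. \<forall>x. N x \<le> C * (\<bar>x$1\<bar> + \<bar>x$2\<bar>)"
proof -
  have hom: "\<And>c x. N (c *\<^sub>R x) = \<bar>c\<bar> * N x" and tri: "\<And>x y. N (x + y) \<le> N x + N y"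
    and pos: "\<And>x. 0 \<le> N x" and z: "\<And>x. N x = 0 \<longleftrightarrow> x = 0"
    using assms unfolding is_norm_R2_def by auto
  define e1 where "e1 = (vector [1, 0] :: real^2)"
  define e2 where "e2 = (vector [0, 1] :: real^2)"
  have "e1 \<noteq> 0" unfolding e1_def by (metis vector_2(1) zero_index zero_neq_one)
  then have "N e1 > 0" using pos z by (metis less_eq_real_def)
  moreover have "N e2 \<ge> 0" by (rule pos)
  ultimately have Cp: "N e1 + N e2 > 0" by simp
  show ?thesis
  proof (intro exI[of _ "N e1 + N e2"] conjI allI Cp)
    fix x :: "real^2"
    have "N x = N ((x$1) *\<^sub>R e1 + (x$2) *\<^sub>R e2)" using vec2_decomp[of x] unfolding e1_def e2_def by simp
    also have "\<dots> \<le> \<bar>x$1\<bar> * N e1 + \<bar>x$2\<bar> * N e2" using tri hom by (metis)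
    also have "\<dots> \<le> (N e1 + N e2) * (\<bar>x$1\<bar> + \<bar>x$2\<bar>)"
      using pos[of e1] pos[of e2] by (simp add: algebra_simps)
    finally show "N x \<le> (N e1 + N e2) * (\<bar>x$1\<bar> + \<bar>x$2\<bar>)" .
  qed
qed

lemma norm_low:
  assumes "is_norm_R2 N"
  shows "\<exists>m>0. \<forall>x. m * norm x \<le> N x"
proof -
  have hom: "\<And>c x. N (c *\<^sub>R x) = \<bar>c\<bar> * N x" and tri: "\<And>x y. N (x + y) \<le> N x + N y"
    and pos: "\<And>x. 0 \<le> N x" and z: "\<And>x. N x = 0 \<longleftrightarrow> x = 0"
    using assms unfolding is_norm_R2_def by auto
  obtain C where C: "C > 0" "\<And>x. N x \<le> C * (\<bar>x$1\<bar> + \<bar>x$2\<bar>)" using norm_up[OF assms] by auto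
  have Nn: "N x \<le> 2 * C * norm x" for x
  proof -
    have "N x \<le> C * (\<bar>x$1\<bar> + \<bar>x$2\<bar>)" by (rule C)
    also have "\<dots> \<le> C * (norm x + norm x)"
      using C component_le_norm_cart[of x 1] component_le_norm_cart[of x 2]
      by (intro mult_left_mono add_mono) auto
    finally show ?thesis by simp
  qed
  have lip: "\<bar>N x - N y\<bar> \<le> 2 * C * dist x y" for x y
  proof -
    have "N x \<le> N (x - y) + N y" using tri[of "x - y" y] by simp
    moreover have "N y \<le> N (y - x) + N x" using tri[of "y - x" x] by simp
    moreover have "N (y - x) = N (x - y)" using hom[of "-1" "x - y"] by simp
    moreover have "N (x - y) \<le> 2 * C * dist x y" using Nn[of "x - y"] by (simp add: dist_norm)
    ultimately show ?thesis by linarith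
  qed
  have cont: "continuous_on (sphere 0 1) N"
    unfolding continuous_on_iff
  proof (intro ballI allI impI)
    fix x e assume "e > (0::real)"
    then show "\<exists>d>0. \<forall>x'\<in>sphere 0 1. dist x' x < d \<longrightarrow> dist (N x') (N x) < e"
      using C lip
      by (intro exI[of _ "e / (2 * C)"]) (auto simp: dist_real_def field_simps intro: le_less_trans)
  qed
  have ne: "sphere (0::real^2) 1 \<noteq> {}"
  proof -
    have "(vector [1, 0] :: real^2) \<in> sphere 0 1" by (simp add: norm_vec2)
    then show ?thesis by blast
  qed
  obtain x0 where x0: "x0 \<in> sphere (0::real^2) 1" "\<And>y. y \<in> sphere 0 1 \<Longrightarrow> N x0 \<le> N y"
    using continuous_attains_inf[OF compact_sphere ne cont] by auto
  have "x0 \<noteq> 0" using x0(1) by auto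
  then have m: "N x0 > 0" using pos z by (metis less_eq_real_def)
  show ?thesis
  proof (intro exI[of _ "N x0"] conjI allI m)
    fix x :: "real^2"
    show "N x0 * norm x \<le> N x"
    proof (cases "x = 0")
      case True then show ?thesis using pos by simp
    next
      case False
      then have nx: "norm x > 0" by simp
      have "(1 / norm x) *\<^sub>R x \<in> sphere 0 1" using nx by simp
      then have "N x0 \<le> N ((1 / norm x) *\<^sub>R x)" by (rule x0(2))
      also have "\<dots> = N x / norm x" using hom nx by simp
      finally show ?thesis using nx by (simp add: field_simps)
    qed
  qed
qed

lemma induced_bound:
  assumes "is_norm_R2 N"
  shows "N (A *v x) \<le> induced_norm N A * N x"
proof -
  have hom: "\<And>c x. N (c *\<^sub>R x) = \<bar>c\<bar> * N x"
    and pos: "\<And>x. 0 \<le> N x" and z: "\<And>x. N x = 0 \<longleftrightarrow> x = 0"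
    using assms unfolding is_norm_R2_def by auto
  obtain m where m: "m > 0" "\<And>x. m * norm x \<le> N x" using norm_low[OF assms] by auto
  obtain C where C: "C > 0" "\<And>x. N x \<le> C * (\<bar>x$1\<bar> + \<bar>x$2\<bar>)" using norm_up[OF assms] by auto
  obtain B where B: "B > 0" "\<And>x. norm (A *v x) \<le> norm x * B"
    using bounded_linear.pos_bounded[OF matrix_vector_mul_bounded_linear[of A]] by auto
  have bdd: "bdd_above {N (A *v y) | y. N y = 1}"
  proof (rule bdd_aboveI[of _ "2 * C * (B / m)"])
    fix t assume "t \<in> {N (A *v y) | y. N y = 1}"
    then obtain y where y: "N y = 1" "t = N (A *v y)" by auto
    have ny: "norm y \<le> 1 / m" using m(2)[of y] m(1) y by (simp add: field_simps)
    have "N (A *v y) \<le> C * (norm (A *v y) + norm (A *v y))"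
      using C component_le_norm_cart[of "A *v y" 1] component_le_norm_cart[of "A *v y" 2]
      by (smt (verit) mult_left_mono)
    also have "\<dots> \<le> C * (2 * (norm y * B))" using B(2)[of y] C by (intro mult_left_mono) auto
    also have "\<dots> \<le> C * (2 * ((1 / m) * B))" using ny B C by (intro mult_left_mono mult_right_mono) auto
    finally show "t \<le> 2 * C * (B / m)" using y by (simp add: algebra_simps)
  qed
  show ?thesis
  proof (cases "x = 0")
    case True then show ?thesis using z[of 0] by simp
  next
    case False
    then have nx: "N x > 0" using pos z by (metis less_eq_real_def)
    define y where "y = (1 / N x) *\<^sub>R x"
    have y1: "N y = 1" unfolding y_def using hom nx by simp
    have "N (A *v y) \<le> induced_norm N A"
      unfolding induced_norm_def using y1 by (intro cSup_upper[OF _ bdd]) auto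
    moreover have "N (A *v y) = N (A *v x) / N x"
      unfolding y_def matrix_vector_mult_scaleR using hom nx by simp
    ultimately show ?thesis using nx by (simp add: field_simps)
  qed
qed


lemma row:
  fixes a p c clo chi :: real
  assumes "0 \<le> a" "a < 1" "p > 0" "0 < clo" "clo \<le> c" "c \<le> chi" "(1 + a) * chi * p < 2"
  shows "\<bar>1 - c * p\<bar> + \<bar>- a * c * p\<bar> \<le> max (1 - (1 - a) * clo * p) ((1 + a) * chi * p - 1)"
proof -
  have c0: "c > 0" using assms by simp
  have acp: "\<bar>- a * c * p\<bar> = a * c * p" using assms c0 by (simp add: abs_mult)
  show ?thesis
  proof (cases "c * p \<le> 1")
    case True
    have "(1 - a) * clo * p \<le> (1 - a) * c * p" using assms by (intro mult_right_mono mult_left_mono) auto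
    then show ?thesis using True acp by (simp add: algebra_simps)
  next
    case False
    have "(1 + a) * c * p \<le> (1 + a) * chi * p" using assms by (intro mult_right_mono mult_left_mono) auto
    then show ?thesis using False acp by (simp add: algebra_simps)
  qed
qed

lemma row_lt:
  fixes a p clo chi :: real
  assumes "0 \<le> a" "a < 1" "p > 0" "0 < clo" "(1 + a) * chi * p < 2"
  shows "max (1 - (1 - a) * clo * p) ((1 + a) * chi * p - 1) < 1"
  using assms by simp

lemma lin_row:
  fixes u v k1 k2 L :: real
  assumes "\<bar>k1\<bar> + \<bar>k2\<bar> \<le> L"
  shows "\<bar>k1 * u + k2 * v\<bar> \<le> L * max \<bar>u\<bar> \<bar>v\<bar>"
proof -
  have "\<bar>k1 * u + k2 * v\<bar> \<le> \<bar>k1\<bar> * \<bar>u\<bar> + \<bar>k2\<bar> * \<bar>v\<bar>" by (simp add: abs_mult[symmetric] abs_triangle_ineq)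
  also have "\<dots> \<le> \<bar>k1\<bar> * max \<bar>u\<bar> \<bar>v\<bar> + \<bar>k2\<bar> * max \<bar>u\<bar> \<bar>v\<bar>"
    by (intro add_mono mult_left_mono) auto
  also have "\<dots> \<le> L * max \<bar>u\<bar> \<bar>v\<bar>" using assms by (simp add: distrib_right[symmetric] mult_right_mono)
  finally show ?thesis .
qed




lemma pq_pos:
  assumes "0 < a" "a < 1" "0 < b" "b < 1" "r > a * s" "s > b * r"
  shows "eq_p a b r s > 0" "eq_q a b r s > 0"
proof -
  have "a * b < 1 * 1" using assms by (intro mult_strict_mono) auto
  then have ab1: "1 - a * b > 0" by simp
  show "eq_p a b r s > 0" using ab1 assms unfolding eq_p_def by simp
  show "eq_q a b r s > 0" using ab1 assms unfolding eq_q_def by simp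
qed

lemma chi_bound:
  fixes p a lo :: real
  assumes "p > 0" "a > 0" "max (1 - 2 / (p * (1 + a))) 0 < lo"
  shows "(1 + a) * (1 - lo) * p < 2"
proof -
  have pa: "p * (1 + a) > 0" using assms by simp
  have "1 - lo < 2 / (p * (1 + a))" using assms(3) by linarith
  then have "(1 - lo) * (p * (1 + a)) < 2" using pa by (simp add: less_divide_eq)
  then show ?thesis by (simp add: algebra_simps)
qed

lemma case_b:
  fixes a b r s :: real and alpha beta :: "nat \<Rightarrow> real"
  assumes ab: "0 < a" "a < 1" "0 < b" "b < 1" and rs: "r > a * s" "s > b * r"
    and h: "0 \<le> al_lo" "al_lo < al_hi" "al_hi < 1" "0 \<le> be_lo" "be_lo < be_hi" "be_hi < 1"
      "max (1 - 2 / (eq_p a b r s * (1 + a))) 0 < al_lo"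
      "max (1 - 2 / (eq_q a b r s * (1 + b))) 0 < be_lo"
    and bnd: "\<And>n. al_lo < alpha n \<and> alpha n < al_hi \<and> be_lo < beta n \<and> beta n < be_hi"
  shows "loc_asym_stable a b r s alpha beta"
proof -
  define p where "p = eq_p a b r s"
  define q where "q = eq_q a b r s"
  have p: "p > 0" and q: "q > 0" using pq_pos[OF ab rs] unfolding p_def q_def by auto
  have hp: "(1 + a) * (1 - al_lo) * p < 2" using chi_bound[OF p ab(1)] h(7) unfolding p_def by simp
  have hq: "(1 + b) * (1 - be_lo) * q < 2" using chi_bound[OF q ab(3)] h(8) unfolding q_def by simp
  define L1 where "L1 = max (1 - (1 - a) * (1 - al_hi) * p) ((1 + a) * (1 - al_lo) * p - 1)"
  define L2 where "L2 = max (1 - (1 - b) * (1 - be_hi) * q) ((1 + b) * (1 - be_lo) * q - 1)"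
  define lam where "lam = max L1 L2"
  have L1: "L1 < 1" unfolding L1_def using row_lt[of a p "1 - al_hi" "1 - al_lo"] ab p h hp by simp
  have L2: "L2 < 1" unfolding L2_def using row_lt[of b q "1 - be_hi" "1 - be_lo"] ab q h hq by simp
  have lam1: "lam < 1" unfolding lam_def using L1 L2 by simp
  have r1: "\<bar>1 - (1 - alpha n) * p\<bar> + \<bar>- a * (1 - alpha n) * p\<bar> \<le> L1" for n
    unfolding L1_def using row[of a p "1 - al_hi" "1 - alpha n" "1 - al_lo"] ab p h hp bnd[of n] by simp
  have r2: "\<bar>1 - (1 - beta n) * q\<bar> + \<bar>- b * (1 - beta n) * q\<bar> \<le> L2" for n
    unfolding L2_def using row[of b q "1 - be_hi" "1 - beta n" "1 - be_lo"] ab q h hq bnd[of n] by simp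
  have "0 \<le> L1" using r1[of 0] abs_ge_zero[of "1 - (1 - alpha 0) * p"] abs_ge_zero[of "- a * (1 - alpha 0) * p"] by linarith
  then have lam0: "0 \<le> lam" unfolding lam_def by simp
  define N where "N x = max \<bar>x$1\<bar> \<bar>x$2\<bar>" for x :: "real^2"
  have hom: "N (c *\<^sub>R x) = \<bar>c\<bar> * N x" for c x
  proof (cases "\<bar>x$1\<bar> \<le> \<bar>x$2\<bar>")
    case True
    then have "\<bar>c\<bar> * \<bar>x$1\<bar> \<le> \<bar>c\<bar> * \<bar>x$2\<bar>" by (intro mult_left_mono) auto
    then show ?thesis using True unfolding N_def vector_scaleR_component by (simp add: abs_mult max_absorb2)
  next
    case False
    then have "\<bar>c\<bar> * \<bar>x$2\<bar> \<le> \<bar>c\<bar> * \<bar>x$1\<bar>" by (intro mult_left_mono) auto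
    then show ?thesis using False unfolding N_def vector_scaleR_component by (simp add: abs_mult max_absorb1)
  qed
  have tri: "N (x + y) \<le> N x + N y" for x y
  proof -
    have "\<bar>x$1 + y$1\<bar> \<le> N x + N y" unfolding N_def using abs_triangle_ineq[of "x$1" "y$1"] by linarith
    moreover have "\<bar>x$2 + y$2\<bar> \<le> N x + N y" unfolding N_def using abs_triangle_ineq[of "x$2" "y$2"] by linarith
    ultimately show ?thesis unfolding N_def vector_add_component by (rule max.boundedI)
  qed
  have low: "(1/2) * norm x \<le> N x" for x
    using norm_le_l1_cart[of x] unfolding N_def sum_2 by linarith
  have up: "N x \<le> 1 * (\<bar>x$1\<bar> + \<bar>x$2\<bar>)" for x unfolding N_def by simp
  have Jb: "N (jac a b r s (alpha n) (beta n) *v x) \<le> lam * N x" for n x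
  proof -
    have "jac a b r s (alpha n) (beta n) *v x =
      vector [(1 - (1 - alpha n) * p) * x$1 + (- a * (1 - alpha n) * p) * x$2,
              (- b * (1 - beta n) * q) * x$1 + (1 - (1 - beta n) * q) * x$2]"
      unfolding jac_def Let_def p_def[symmetric] q_def[symmetric]
      by (subst vec2_eq[of x]) (rule mv2)
    moreover have "\<bar>(1 - (1 - alpha n) * p) * x$1 + (- a * (1 - alpha n) * p) * x$2\<bar> \<le> L1 * N x"
      unfolding N_def by (rule lin_row[OF r1])
    moreover have "\<bar>(- b * (1 - beta n) * q) * x$1 + (1 - (1 - beta n) * q) * x$2\<bar> \<le> L2 * N x"
    proof -
      have "\<bar>(1 - (1 - beta n) * q) * x$2 + (- b * (1 - beta n) * q) * x$1\<bar> \<le> L2 * max \<bar>x$2\<bar> \<bar>x$1\<bar>"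
        by (rule lin_row[OF r2[of n]])
      then show ?thesis unfolding N_def by (simp only: add.commute max.commute)
    qed
    moreover have "L1 * N x \<le> lam * N x" "L2 * N x \<le> lam * N x"
      unfolding lam_def N_def by (intro mult_right_mono; simp)+
    ultimately show ?thesis unfolding N_def by simp
  qed
  show ?thesis
  proof (rule core[where N=N and m="1/2" and C=1 and lam=lam])
    show "0 \<le> alpha n \<and> alpha n \<le> 1" for n using bnd[of n] h by linarith
    show "0 \<le> beta n \<and> beta n \<le> 1" for n using bnd[of n] h by linarith
    show "\<And>c x. N (c *\<^sub>R x) = \<bar>c\<bar> * N x" by (rule hom)
    show "\<And>x y. N (x + y) \<le> N x + N y" by (rule tri)
    show "\<And>x. 1 / 2 * norm x \<le> N x" by (rule low)
    show "\<And>x. N x \<le> 1 * (\<bar>x $ 1\<bar> + \<bar>x $ 2\<bar>)" by (rule up)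
    show "\<And>n x. N (jac a b r s (alpha n) (beta n) *v x) \<le> lam * N x" by (rule Jb)
  qed (use ab rs lam0 lam1 in auto)
qed

theorem mainTheorem7:
  fixes a b r s :: real and alpha beta :: "nat \<Rightarrow> real"
  assumes "0 < a" "a < 1" "0 < b" "b < 1" "r > a * s" "s > b * r"
    and "(\<exists>lam N al_lo al_hi be_lo be_hi.
            0 < lam \<and> lam < 1 \<and> is_norm_R2 N \<and>
            0 \<le> al_lo \<and> al_lo < al_hi \<and> al_hi < 1 \<and>
            0 \<le> be_lo \<and> be_lo < be_hi \<and> be_hi < 1 \<and>
            (\<forall>n. al_lo < alpha n \<and> alpha n < al_hi \<and>
                 be_lo < beta n \<and> beta n < be_hi \<and>
                 induced_norm N (jac a b r s (alpha n) (beta n)) \<le> lam))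
       \<or> (\<exists>al_lo al_hi be_lo be_hi.
            0 \<le> al_lo \<and> al_lo < al_hi \<and> al_hi < 1 \<and>
            0 \<le> be_lo \<and> be_lo < be_hi \<and> be_hi < 1 \<and>
            max (1 - 2 / (eq_p a b r s * (1 + a))) 0 < al_lo \<and> al_lo < 1 \<and>
            max (1 - 2 / (eq_q a b r s * (1 + b))) 0 < be_lo \<and> be_lo < 1 \<and>
            (\<forall>n. al_lo < alpha n \<and> alpha n < al_hi \<and>
                 be_lo < beta n \<and> beta n < be_hi))"
  shows "loc_asym_stable a b r s alpha beta"
  using assms(7)
proof
  assume "\<exists>lam N al_lo al_hi be_lo be_hi.
            0 < lam \<and> lam < 1 \<and> is_norm_R2 N \<and>
            0 \<le> al_lo \<and> al_lo < al_hi \<and> al_hi < 1 \<and>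
            0 \<le> be_lo \<and> be_lo < be_hi \<and> be_hi < 1 \<and>
            (\<forall>n. al_lo < alpha n \<and> alpha n < al_hi \<and>
                 be_lo < beta n \<and> beta n < be_hi \<and>
                 induced_norm N (jac a b r s (alpha n) (beta n)) \<le> lam)"
  then obtain lam N al_lo al_hi be_lo be_hi where
    h: "0 < lam" "lam < 1" "is_norm_R2 N" "0 \<le> al_lo" "al_lo < al_hi" "al_hi < 1"
       "0 \<le> be_lo" "be_lo < be_hi" "be_hi < 1"
    and bnd: "\<And>n. al_lo < alpha n \<and> alpha n < al_hi \<and>
                 be_lo < beta n \<and> beta n < be_hi \<and>
                 induced_norm N (jac a b r s (alpha n) (beta n)) \<le> lam"
    by blast
  have hom: "\<And>c x. N (c *\<^sub>R x) = \<bar>c\<bar> * N x" and tri: "\<And>x y. N (x + y) \<le> N x + N y"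
    and pos: "\<And>x. 0 \<le> N x"
    using h(3) unfolding is_norm_R2_def by auto
  obtain m where m: "m > 0" "\<And>x. m * norm x \<le> N x" using norm_low[OF h(3)] by auto
  obtain C where C: "C > 0" "\<And>x. N x \<le> C * (\<bar>x$1\<bar> + \<bar>x$2\<bar>)" using norm_up[OF h(3)] by auto
  have Jb: "N (jac a b r s (alpha n) (beta n) *v x) \<le> lam * N x" for n x
  proof -
    have "N (jac a b r s (alpha n) (beta n) *v x) \<le> induced_norm N (jac a b r s (alpha n) (beta n)) * N x"
      by (rule induced_bound[OF h(3)])
    also have "\<dots> \<le> lam * N x" using bnd[of n] pos[of x] by (intro mult_right_mono) auto
    finally show ?thesis .
  qed
  show ?thesis
  proof (rule core[where N=N and m=m and C=C and lam=lam])
    show "0 \<le> alpha n \<and> alpha n \<le> 1" for n using bnd[of n] h by linarith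
    show "0 \<le> beta n \<and> beta n \<le> 1" for n using bnd[of n] h by linarith
    show "\<And>c x. N (c *\<^sub>R x) = \<bar>c\<bar> * N x" by (rule hom)
    show "\<And>x y. N (x + y) \<le> N x + N y" by (rule tri)
    show "\<And>x. m * norm x \<le> N x" by (rule m(2))
    show "\<And>x. N x \<le> C * (\<bar>x $ 1\<bar> + \<bar>x $ 2\<bar>)" by (rule C(2))
    show "\<And>n x. N (jac a b r s (alpha n) (beta n) *v x) \<le> lam * N x" by (rule Jb)
  qed (use m(1) C(1) assms(1-6) h(1,2) in auto)
next
  assume "\<exists>al_lo al_hi be_lo be_hi.
            0 \<le> al_lo \<and> al_lo < al_hi \<and> al_hi < 1 \<and>
            0 \<le> be_lo \<and> be_lo < be_hi \<and> be_hi < 1 \<and>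
            max (1 - 2 / (eq_p a b r s * (1 + a))) 0 < al_lo \<and> al_lo < 1 \<and>
            max (1 - 2 / (eq_q a b r s * (1 + b))) 0 < be_lo \<and> be_lo < 1 \<and>
            (\<forall>n. al_lo < alpha n \<and> alpha n < al_hi \<and>
                 be_lo < beta n \<and> beta n < be_hi)"
  then obtain al_lo al_hi be_lo be_hi where
    h: "0 \<le> al_lo" "al_lo < al_hi" "al_hi < 1" "0 \<le> be_lo" "be_lo < be_hi" "be_hi < 1"
      "max (1 - 2 / (eq_p a b r s * (1 + a))) 0 < al_lo"
      "max (1 - 2 / (eq_q a b r s * (1 + b))) 0 < be_lo"
    and bnd: "\<And>n. al_lo < alpha n \<and> alpha n < al_hi \<and> be_lo < beta n \<and> beta n < be_hi"
    by blast
  show ?thesis by (rule case_b[OF assms(1-6) h bnd])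
qed


end
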